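(* Let $x^*\in\mathbb{R}^n$ satisfy $Ax^*=b$, and let $x_1,\ldots,x_\ell\in\mathbb{R}^n$ be points with \[x_\ell=\operatorname{argmin}_{\xi\in\operatorname{aff}(x_1,\ldots,x_\ell)}\|\xi-x^*\|^2.\] If $P(x_\ell)\in\operatorname{aff}(x_1,\ldots,x_\ell)$, then $r(x_\ell)=0$, $P(x_\ell)=x_\ell$ and $Ax_\ell=b$.
   Context: Let $A=(a_1,\ldots,a_m)^T\in\mathbb{R}^{m\times n}$ with rows $a_j\in\mathbb{R}^n\setminus\{0\}$, and let $b\in\mathbb{R}^m$ lie in the range of $A$. Norms are Euclidean. For $j=1,\ldots,m$ define the projectors $P_j:\mathbb{R}^n\to\mathbb{R}^n$, $P_j(x)=\big(I-\frac{a_ja_j^T}{\|a_j\|^2}\big)x+\frac{b_j}{\|a_j\|^2}a_j$ (the orthogonal projection onto $\{z:a_j^Tz=b_j\}$), and the Kaczmarz cycle $P=P_m\circ\cdots\circ P_1$. The residual $r:\mathbb{R}^n\to\mathbb{R}^m$ is defined by $r_1(x)=(a_1^Tx-b_1)/\|a_1\|$ and $r_j(x)=(a_j^T(P_{j-1}\circ\cdots\circ P_1)(x)-b_j)/\|a_j\|$ for $j=2,\ldots,m$. $\operatorname{aff}(\cdot)$ denotes the affine hull. *)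

theory Defs
  imports "HOL-Analysis.Analysis"
begin

text \<open>Rows of A are a 1, ..., a m (1-based); right-hand side b 1, ..., b m.\<close>

definition kproj :: "(nat \<Rightarrow> real ^'n) \<Rightarrow> (nat \<Rightarrow> real) \<Rightarrow> nat \<Rightarrow> real ^'n \<Rightarrow> real ^'n" where
  "kproj a b j x = x - ((a j \<bullet> x) / (norm (a j))\<^sup>2) *\<^sub>R a j + (b j / (norm (a j))\<^sup>2) *\<^sub>R a j"

fun kcomp :: "(nat \<Rightarrow> real ^'n) \<Rightarrow> (nat \<Rightarrow> real) \<Rightarrow> nat \<Rightarrow> real ^'n \<Rightarrow> real ^'n" where
  "kcomp a b 0 = id"
| "kcomp a b (Suc k) = kproj a b (Suc k) \<circ> kcomp a b k"

definition kcycle :: "(nat \<Rightarrow> real ^'n) \<Rightarrow> (nat \<Rightarrow> real) \<Rightarrow> nat \<Rightarrow> real ^'n \<Rightarrow> real ^'n" where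
  "kcycle a b m = kcomp a b m"

definition kres :: "(nat \<Rightarrow> real ^'n) \<Rightarrow> (nat \<Rightarrow> real) \<Rightarrow> nat \<Rightarrow> real ^'n \<Rightarrow> real" where
  "kres a b j x = (a j \<bullet> kcomp a b (j - 1) x - b j) / norm (a j)"

end

theory Submission
  imports Defs
begin

lemma kproj_dist:
  fixes a :: "nat \<Rightarrow> real ^'n"
  assumes nz: "a j \<noteq> 0" and s: "a j \<bullet> xstar = b j"
  shows "(norm (kproj a b j z - xstar))\<^sup>2 = (norm (z - xstar))\<^sup>2 - ((a j \<bullet> z - b j) / norm (a j))\<^sup>2"
proof -
  define t where "t = (a j \<bullet> z - b j) / (norm (a j))\<^sup>2"
  have n0: "norm (a j) \<noteq> 0" using nz by simp
  have e: "kproj a b j z - xstar = (z - xstar) - t *\<^sub>R a j"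
    unfolding kproj_def t_def by (simp add: algebra_simps diff_divide_distrib)
  have "(norm ((z - xstar) - t *\<^sub>R a j))\<^sup>2 = (norm (z - xstar))\<^sup>2 - 2 * t * (a j \<bullet> (z - xstar)) + t\<^sup>2 * (norm (a j))\<^sup>2"
    unfolding power2_norm_eq_inner by (simp add: inner_diff_left inner_diff_right inner_commute algebra_simps power2_eq_square)
  also have "a j \<bullet> (z - xstar) = a j \<bullet> z - b j" using s by (simp add: inner_diff_right)
  also have "(norm (z - xstar))\<^sup>2 - 2 * t * (a j \<bullet> z - b j) + t\<^sup>2 * (norm (a j))\<^sup>2
      = (norm (z - xstar))\<^sup>2 - ((a j \<bullet> z - b j) / norm (a j))\<^sup>2"
    unfolding t_def using n0 by (simp add: field_simps power2_eq_square)
  finally show ?thesis unfolding e .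
qed

lemma kcomp_dist:
  fixes a :: "nat \<Rightarrow> real ^'n"
  assumes nz: "\<forall>j\<in>{1..m}. a j \<noteq> 0" and s: "\<forall>j\<in>{1..m}. a j \<bullet> xstar = b j"
  shows "k \<le> m \<Longrightarrow> (norm (kcomp a b k z - xstar))\<^sup>2 = (norm (z - xstar))\<^sup>2 - (\<Sum>j=1..k. (kres a b j z)\<^sup>2)"
proof (induction k)
  case 0 then show ?case by simp
next
  case (Suc k)
  have "(norm (kcomp a b (Suc k) z - xstar))\<^sup>2 = (norm (kproj a b (Suc k) (kcomp a b k z) - xstar))\<^sup>2" by simp
  also have "\<dots> = (norm (kcomp a b k z - xstar))\<^sup>2 - (kres a b (Suc k) z)\<^sup>2"
    using kproj_dist[of a "Suc k" xstar b] nz s Suc.prems by (simp add: kres_def)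
  finally show ?case using Suc by simp
qed

lemma kcomp_fix:
  fixes a :: "nat \<Rightarrow> real ^'n"
  assumes nz: "\<forall>j\<in>{1..m}. a j \<noteq> 0" and r: "\<forall>j\<in>{1..m}. kres a b j z = 0"
  shows "k \<le> m \<Longrightarrow> kcomp a b k z = z"
proof (induction k)
  case 0 then show ?case by simp
next
  case (Suc k)
  then have ih: "kcomp a b k z = z" by simp
  have "kres a b (Suc k) z = 0" using r Suc.prems by simp
  then have "a (Suc k) \<bullet> z = b (Suc k)" using nz Suc.prems ih by (simp add: kres_def)
  then show ?case using ih by (simp add: kproj_def)
qed

theorem lemma6:
  fixes a :: "nat \<Rightarrow> real ^'n" and b :: "nat \<Rightarrow> real" and m :: nat
    and xstar :: "real ^'n" and x :: "nat \<Rightarrow> real ^'n" and l :: nat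
  assumes rows_nz: "\<forall>j\<in>{1..m}. a j \<noteq> 0"
    and b_range: "\<exists>z. \<forall>j\<in>{1..m}. a j \<bullet> z = b j"
    and sol: "\<forall>j\<in>{1..m}. a j \<bullet> xstar = b j"
    and l_pos: "l \<ge> 1"
    and argmin: "x l \<in> affine hull (x ` {1..l})"
                "\<forall>\<xi>\<in>affine hull (x ` {1..l}). (norm (x l - xstar))\<^sup>2 \<le> (norm (\<xi> - xstar))\<^sup>2"
    and P_in: "kcycle a b m (x l) \<in> affine hull (x ` {1..l})"
  shows "(\<forall>j\<in>{1..m}. kres a b j (x l) = 0) \<and> kcycle a b m (x l) = x l
         \<and> (\<forall>j\<in>{1..m}. a j \<bullet> x l = b j)"
proof -
  have d: "(norm (kcycle a b m (x l) - xstar))\<^sup>2 = (norm (x l - xstar))\<^sup>2 - (\<Sum>j=1..m. (kres a b j (x l))\<^sup>2)"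
    using kcomp_dist[OF rows_nz sol] by (simp add: kcycle_def)
  have "(norm (x l - xstar))\<^sup>2 \<le> (norm (kcycle a b m (x l) - xstar))\<^sup>2" using argmin(2) P_in by blast
  then have "(\<Sum>j=1..m. (kres a b j (x l))\<^sup>2) \<le> 0" using d by simp
  moreover have "(\<Sum>j=1..m. (kres a b j (x l))\<^sup>2) \<ge> 0" by (simp add: sum_nonneg)
  ultimately have "(\<Sum>j=1..m. (kres a b j (x l))\<^sup>2) = 0" by simp
  then have r: "\<forall>j\<in>{1..m}. kres a b j (x l) = 0"
    by (subst (asm) sum_nonneg_eq_0_iff) auto
  have fx: "\<And>k. k \<le> m \<Longrightarrow> kcomp a b k (x l) = x l" using kcomp_fix[OF rows_nz r] by blast
  have "\<forall>j\<in>{1..m}. a j \<bullet> x l = b j"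
  proof
    fix j assume j: "j \<in> {1..m}"
    have "kres a b j (x l) = 0" using r j by blast
    moreover have "kcomp a b (j - 1) (x l) = x l" using fx j by (metis atLeastAtMost_iff diff_le_self le_trans)
    ultimately show "a j \<bullet> x l = b j" using rows_nz j by (simp add: kres_def)
  qed
  then show ?thesis using r fx by (simp add: kcycle_def)
qed

end
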